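(* Let $W_1,\dots,W_m\in\mathbb{R}^{n\times n}$ be eventually doubly stochastic signed adjacency matrices, let $Q\in\mathbb{R}^{(n-1)\times n}$ satisfy $QQ^\top=I_{n-1}$, $Q\mathbf{1}=0$, fix an integer $r\ge1$, and set $\hat W_k=W_k\otimes\cdots\otimes W_k$ and $\hat Q=Q\otimes\cdots\otimes Q$ ($r$-fold Kronecker products). If there exists a symmetric positive definite $\hat P\in\mathbb{R}^{n^r\times n^r}$ such that \[ \hat Q\hat W_k^\top\hat P\hat W_k\hat Q^\top-\hat Q\hat P\hat Q^\top\prec0\quad\text{for all }k=1,\dots,m, \] then $\{W_1,\dots,W_m\}$ is a consensus set for the switched system $\mathbf{x}(t+1)=W_{\sigma(t)}\mathbf{x}(t)$.
   Context: $W_k$ are real matrices (entries of any sign). $W$ is eventually positive if there is $t_0\in\mathbb{Z}_{\ge0}$ with $W^t$ entrywise positive for all integers $t\ge t_0$; eventually doubly stochastic means eventually positive with $W\mathbf{1}=W^\top\mathbf{1}=\mathbf{1}$. $X\prec0$ means symmetric negative definite. A switching signal is any map $\sigma:\mathbb{Z}_{\ge0}\to\{1,\dots,m\}$; a consensus set is one for which, for every switching signal and every $\mathbf{x}(0)$, $\mathbf{x}(t)\to\alpha\mathbf{1}$ for some $\alpha\in\mathbb{R}$. *)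

theory Defs
  imports "Jordan_Normal_Form.Matrix"
begin

definition ones_vec :: "nat \<Rightarrow> real vec" where
  "ones_vec n = vec n (\<lambda>_. 1)"

definition kron :: "real mat \<Rightarrow> real mat \<Rightarrow> real mat" where
  "kron A B = mat (dim_row A * dim_row B) (dim_col A * dim_col B)
     (\<lambda>(i,j). A $$ (i div dim_row B, j div dim_col B) * B $$ (i mod dim_row B, j mod dim_col B))"

fun kron_pow :: "real mat \<Rightarrow> nat \<Rightarrow> real mat" where
  "kron_pow A 0 = 1\<^sub>m 1"
| "kron_pow A (Suc r) = kron (kron_pow A r) A"

definition eventually_positive :: "nat \<Rightarrow> real mat \<Rightarrow> bool" where
  "eventually_positive n W \<longleftrightarrow> W \<in> carrier_mat n n \<and>
     (\<exists>t0. \<forall>t\<ge>t0. \<forall>i<n. \<forall>j<n. (W ^\<^sub>m t) $$ (i,j) > 0)"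

definition eventually_doubly_stochastic :: "nat \<Rightarrow> real mat \<Rightarrow> bool" where
  "eventually_doubly_stochastic n W \<longleftrightarrow> eventually_positive n W \<and>
     W *\<^sub>v ones_vec n = ones_vec n \<and> transpose_mat W *\<^sub>v ones_vec n = ones_vec n"

definition pos_def :: "nat \<Rightarrow> real mat \<Rightarrow> bool" where
  "pos_def N P \<longleftrightarrow> P \<in> carrier_mat N N \<and> transpose_mat P = P \<and>
     (\<forall>x \<in> carrier_vec N. x \<noteq> 0\<^sub>v N \<longrightarrow> x \<bullet> (P *\<^sub>v x) > 0)"

definition neg_def :: "nat \<Rightarrow> real mat \<Rightarrow> bool" where
  "neg_def N X \<longleftrightarrow> X \<in> carrier_mat N N \<and> transpose_mat X = X \<and>
     (\<forall>x \<in> carrier_vec N. x \<noteq> 0\<^sub>v N \<longrightarrow> x \<bullet> (X *\<^sub>v x) < 0)"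

fun traj :: "(nat \<Rightarrow> real mat) \<Rightarrow> (nat \<Rightarrow> nat) \<Rightarrow> real vec \<Rightarrow> nat \<Rightarrow> real vec" where
  "traj W \<sigma> x0 0 = x0"
| "traj W \<sigma> x0 (Suc t) = W (\<sigma> t) *\<^sub>v traj W \<sigma> x0 t"

definition consensus_set :: "nat \<Rightarrow> nat \<Rightarrow> (nat \<Rightarrow> real mat) \<Rightarrow> bool" where
  "consensus_set n m W \<longleftrightarrow>
     (\<forall>\<sigma>. (\<forall>t. \<sigma> t \<in> {1..m}) \<longrightarrow>
       (\<forall>x0 \<in> carrier_vec n. \<exists>\<alpha>::real. \<forall>i<n. (\<lambda>t. traj W \<sigma> x0 t $ i) \<longlonglongrightarrow> \<alpha>))"

end

theory Submission
  imports Defs "Jordan_Normal_Form.Determinant"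
begin


lemma sum_div_mod_split:
  fixes f :: "nat \<Rightarrow> nat \<Rightarrow> real"
  shows "(\<Sum>j<a*b. f (j div b) (j mod b)) = (\<Sum>p<a. \<Sum>q<b. f p q)"
proof (induction a)
  case 0 then show ?case by simp
next
  case (Suc a)
  have split: "{..<Suc a * b} = {..<a*b} \<union> {a*b..<a*b+b}" by auto
  have X: "(\<Sum>j\<in>{a*b..<a*b+b}. f (j div b) (j mod b)) = (\<Sum>q<b. f a q)"
  proof -
    have "(\<Sum>j\<in>{a*b..<a*b+b}. f (j div b) (j mod b)) = (\<Sum>q\<in>{..<b}. f ((a*b+q) div b) ((a*b+q) mod b))"
      by (rule sum.reindex_bij_witness[of _ "\<lambda>q. a*b+q" "\<lambda>j. j - a*b"]) auto
    also have "\<dots> = (\<Sum>q<b. f a q)"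
      by (rule sum.cong) auto
    finally show ?thesis .
  qed
  have "(\<Sum>j<Suc a * b. f (j div b) (j mod b)) = (\<Sum>j<a * b. f (j div b) (j mod b)) + (\<Sum>j\<in>{a*b..<a*b+b}. f (j div b) (j mod b))"
    unfolding split by (rule sum.union_disjoint) auto
  then show ?case using Suc X by simp
qed

definition vkron :: "real vec \<Rightarrow> real vec \<Rightarrow> real vec" where
  "vkron u v = vec (dim_vec u * dim_vec v) (\<lambda>i. u $ (i div dim_vec v) * v $ (i mod dim_vec v))"

fun kvec :: "real vec \<Rightarrow> nat \<Rightarrow> real vec" where
  "kvec x 0 = vec 1 (\<lambda>_. 1)"
| "kvec x (Suc r) = vkron (kvec x r) x"

lemma dim_vkron[simp]: "dim_vec (vkron u v) = dim_vec u * dim_vec v"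
  by (simp add: vkron_def)

lemma dim_kvec[simp]: "dim_vec (kvec x r) = dim_vec x ^ r"
proof (induction r)
  case 0 show ?case by simp
next
  case (Suc r) show ?case by (simp add: Suc)
qed

lemma dim_kron[simp]: "dim_row (kron A B) = dim_row A * dim_row B" "dim_col (kron A B) = dim_col A * dim_col B"
  by (simp_all add: kron_def)

lemma kvec_carrier: "x \<in> carrier_vec n \<Longrightarrow> kvec x r \<in> carrier_vec (n ^ r)"
  by (intro carrier_vecI) (simp add: carrier_vecD)

lemma kron_carrier: "A \<in> carrier_mat a b \<Longrightarrow> B \<in> carrier_mat c d \<Longrightarrow> kron A B \<in> carrier_mat (a*c) (b*d)"
  by (intro carrier_matI) (simp_all add: carrier_matD)

lemma kron_pow_carrier: "A \<in> carrier_mat a b \<Longrightarrow> kron_pow A r \<in> carrier_mat (a^r) (b^r)"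
proof (induction r)
  case 0 show ?case by simp
next
  case (Suc r)
  then have "kron (kron_pow A r) A \<in> carrier_mat (a^r * a) (b^r * b)" by (intro kron_carrier)
  then show ?case by (simp add: mult.commute)
qed

lemma scalar_vkron:
  assumes "u \<in> carrier_vec a" "u' \<in> carrier_vec a" "v \<in> carrier_vec b" "v' \<in> carrier_vec b"
  shows "vkron u v \<bullet> vkron u' v' = (u \<bullet> u') * (v \<bullet> v')"
proof -
  have "vkron u v \<bullet> vkron u' v' = (\<Sum>j<a*b. (u $ (j div b) * u' $ (j div b)) * (v $ (j mod b) * v' $ (j mod b)))"
    using assms unfolding scalar_prod_def vkron_def
    by (auto simp: lessThan_atLeast0 intro!: sum.cong)
  also have "\<dots> = (\<Sum>p<a. \<Sum>q<b. (u $ p * u' $ p) * (v $ q * v' $ q))"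
    by (rule sum_div_mod_split)
  also have "\<dots> = (u \<bullet> u') * (v \<bullet> v')"
    using assms unfolding scalar_prod_def
    by (simp add: sum_product lessThan_atLeast0)
  finally show ?thesis .
qed

lemma scalar_kvec: "x \<in> carrier_vec n \<Longrightarrow> kvec x r \<bullet> kvec x r = (x \<bullet> x) ^ r"
proof (induction r)
  case 0 then show ?case by (simp add: scalar_prod_def)
next
  case (Suc r)
  then show ?case
    by (simp add: scalar_vkron[OF kvec_carrier[OF Suc.prems] kvec_carrier[OF Suc.prems] Suc.prems Suc.prems])
qed

lemma kron_mult_vkron:
  assumes A: "A \<in> carrier_mat a b" and B: "B \<in> carrier_mat c d"
    and u: "u \<in> carrier_vec b" and v: "v \<in> carrier_vec d"
  shows "kron A B *\<^sub>v vkron u v = vkron (A *\<^sub>v u) (B *\<^sub>v v)"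
proof (rule eq_vecI)
  show "dim_vec (kron A B *\<^sub>v vkron u v) = dim_vec (vkron (A *\<^sub>v u) (B *\<^sub>v v))"
    using assms by (simp add: kron_def)
next
  fix i assume "i < dim_vec (vkron (A *\<^sub>v u) (B *\<^sub>v v))"
  then have i: "i < a * c" using assms by simp
  then have c0: "c > 0" by (cases c) auto
  have ia: "i div c < a" using i by (simp add: less_mult_imp_div_less)
  have ic: "i mod c < c" using c0 by simp
  have "(kron A B *\<^sub>v vkron u v) $ i = (\<Sum>j<b*d. (A $$ (i div c, j div d) * u $ (j div d)) * (B $$ (i mod c, j mod d) * v $ (j mod d)))"
    using assms i unfolding kron_def vkron_def row_def
    by (auto simp: lessThan_atLeast0 scalar_prod_def intro!: sum.cong)
  also have "\<dots> = (\<Sum>p<b. \<Sum>q<d. (A $$ (i div c, p) * u $ p) * (B $$ (i mod c, q) * v $ q))"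
    by (rule sum_div_mod_split)
  also have "\<dots> = (A *\<^sub>v u) $ (i div c) * (B *\<^sub>v v) $ (i mod c)"
    using assms ia ic unfolding row_def
    by (simp add: scalar_prod_def sum_product lessThan_atLeast0)
  also have "\<dots> = vkron (A *\<^sub>v u) (B *\<^sub>v v) $ i"
    using assms i by (simp add: vkron_def)
  finally show "(kron A B *\<^sub>v vkron u v) $ i = vkron (A *\<^sub>v u) (B *\<^sub>v v) $ i" .
qed

lemma kron_pow_mult_kvec:
  assumes A: "A \<in> carrier_mat a b" and x: "x \<in> carrier_vec b"
  shows "kron_pow A r *\<^sub>v kvec x r = kvec (A *\<^sub>v x) r"
proof (induction r)
  case 0 then show ?case by (auto simp: scalar_prod_def)
next
  case (Suc r)
  have "kron_pow A (Suc r) *\<^sub>v kvec x (Suc r) = vkron (kron_pow A r *\<^sub>v kvec x r) (A *\<^sub>v x)"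
    using kron_mult_vkron[OF kron_pow_carrier[OF A] A kvec_carrier[OF x] x] by simp
  then show ?case using Suc by simp
qed

lemma index_kron: "i < dim_row A * dim_row B \<Longrightarrow> j < dim_col A * dim_col B \<Longrightarrow>
  kron A B $$ (i,j) = A $$ (i div dim_row B, j div dim_col B) * B $$ (i mod dim_row B, j mod dim_col B)"
  by (simp add: kron_def)

lemma transpose_kron:
  assumes A: "A \<in> carrier_mat a b" and B: "B \<in> carrier_mat c d"
  shows "transpose_mat (kron A B) = kron (transpose_mat A) (transpose_mat B)"
proof (rule eq_matI)
  fix i j assume i: "i < dim_row (kron (transpose_mat A) (transpose_mat B))"
    and j: "j < dim_col (kron (transpose_mat A) (transpose_mat B))"
  have i': "i < b*d" and j': "j < a*c" using i j assms by auto
  have d0: "d > 0" using i' by (cases d) auto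
  have c0: "c > 0" using j' by (cases c) auto
  have b1: "i div d < b" "j div c < a" "i mod d < d" "j mod c < c"
    using i' j' c0 d0 by (auto simp: less_mult_imp_div_less)
  have "transpose_mat (kron A B) $$ (i, j) = kron A B $$ (j, i)"
    using i' j' assms by simp
  also have "\<dots> = A $$ (j div c, i div d) * B $$ (j mod c, i mod d)"
    using i' j' assms by (simp add: index_kron)
  also have "\<dots> = kron (transpose_mat A) (transpose_mat B) $$ (i, j)"
    using i' j' assms b1 by (simp add: index_kron)
  finally show "transpose_mat (kron A B) $$ (i, j) = kron (transpose_mat A) (transpose_mat B) $$ (i, j)" .
qed (use assms in simp_all)

lemma transpose_kron_pow:
  assumes A: "A \<in> carrier_mat a b"
  shows "transpose_mat (kron_pow A r) = kron_pow (transpose_mat A) r"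
proof (induction r)
  case 0 then show ?case by simp
next
  case (Suc r)
  have "transpose_mat (kron_pow A (Suc r)) = kron (transpose_mat (kron_pow A r)) (transpose_mat A)"
    using transpose_kron[OF kron_pow_carrier[OF A] A] by simp
  then show ?case using Suc by simp
qed



lemma self_scalar_nonneg: "(x::real vec) \<bullet> x \<ge> 0"
  by (simp add: scalar_prod_def sum_nonneg)

lemma self_scalar_zero:
  assumes x: "(x::real vec) \<in> carrier_vec N" and z: "x \<bullet> x = 0"
  shows "x = 0\<^sub>v N"
proof (rule eq_vecI)
  fix i assume i: "i < dim_vec (0\<^sub>v N)"
  have "(\<Sum>j\<in>{0..<N}. x $ j * x $ j) = 0" using z x by (simp add: scalar_prod_def)
  then have "\<forall>j\<in>{0..<N}. x $ j * x $ j = 0" by (subst sum_nonneg_eq_0_iff[symmetric]) auto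
  then show "x $ i = 0\<^sub>v N $ i" using i by simp
qed (use x in simp)


lemma multi_subseq:
  fixes f :: "nat \<Rightarrow> nat \<Rightarrow> real"
  assumes bnd: "\<And>k i. \<bar>f k i\<bar> \<le> B"
  shows "\<exists>s L. strict_mono s \<and> (\<forall>i<N. (\<lambda>k. f (s k) i) \<longlonglongrightarrow> L i)"
proof (induction N)
  case 0 then show ?case by (rule exI[of _ id]) (auto simp: strict_mono_def)
next
  case (Suc N)
  then obtain s L where s: "strict_mono s" and L: "\<forall>i<N. (\<lambda>k. f (s k) i) \<longlonglongrightarrow> L i" by blast
  let ?g = "\<lambda>k. f (s k) N"
  obtain s' where s': "strict_mono s'" and mono: "monoseq (\<lambda>k. ?g (s' k))"
    using seq_monosub[of ?g] by blast
  have "Bseq (\<lambda>k. ?g (s' k))" by (rule BseqI'[of _ B]) (use bnd in auto)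
  then have "convergent (\<lambda>k. ?g (s' k))" using mono Bseq_monoseq_convergent by blast
  then obtain l where l: "(\<lambda>k. ?g (s' k)) \<longlonglongrightarrow> l" by (auto simp: convergent_def)
  have "strict_mono (s \<circ> s')" using s s' by (simp add: strict_mono_def)
  moreover have "\<forall>i<Suc N. (\<lambda>k. f ((s \<circ> s') k) i) \<longlonglongrightarrow> (L(N := l)) i"
  proof (intro allI impI)
    fix i assume "i < Suc N"
    show "(\<lambda>k. f ((s \<circ> s') k) i) \<longlonglongrightarrow> (L(N := l)) i"
    proof (cases "i = N")
      case True then show ?thesis using l by simp
    next
      case False
      then have "i < N" using \<open>i < Suc N\<close> by simp
      then have "((\<lambda>k. f (s k) i) \<circ> s') \<longlonglongrightarrow> L i" using L s' LIMSEQ_subseq_LIMSEQ by blast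
      then show ?thesis using False by (simp add: o_def)
    qed
  qed
  ultimately show ?case by blast
qed

lemma quad_form_sum:
  assumes A: "A \<in> carrier_mat N N" and x: "x \<in> carrier_vec N"
  shows "x \<bullet> (A *\<^sub>v x) = (\<Sum>i<N. \<Sum>j<N. x $ i * A $$ (i,j) * x $ j)"
  using A x by (simp add: scalar_prod_def row_def sum_distrib_left lessThan_atLeast0 mult.assoc)

lemma neg_def_uniform:
  fixes A :: "real mat"
  assumes A: "A \<in> carrier_mat N N"
    and neg: "\<forall>x\<in>carrier_vec N. x \<noteq> 0\<^sub>v N \<longrightarrow> x \<bullet> (A *\<^sub>v x) < 0"
  shows "\<exists>c>0. \<forall>x\<in>carrier_vec N. x \<bullet> (A *\<^sub>v x) \<le> - c * (x \<bullet> x)"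
proof (rule ccontr)
  assume "\<not> ?thesis"
  then have H: "\<forall>c>0. \<exists>x\<in>carrier_vec N. x \<bullet> (A *\<^sub>v x) > - c * (x \<bullet> x)"
    by (simp add: not_le)
  have "\<forall>k::nat. \<exists>x\<in>carrier_vec N. x \<bullet> (A *\<^sub>v x) > - (1 / (real k + 1)) * (x \<bullet> x)"
  proof
    fix k :: nat
    have "(1 / (real k + 1)) > 0" by simp
    from H[rule_format, OF this] show "\<exists>x\<in>carrier_vec N. x \<bullet> (A *\<^sub>v x) > - (1 / (real k + 1)) * (x \<bullet> x)" .
  qed
  then obtain xs where xs: "\<And>k. xs k \<in> carrier_vec N"
    and xsp: "\<And>k. xs k \<bullet> (A *\<^sub>v xs k) > - (1 / (real k + 1)) * (xs k \<bullet> xs k)"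
    by metis
  have nz: "xs k \<bullet> xs k > 0" for k
  proof -
    have "xs k \<noteq> 0\<^sub>v N"
    proof
      assume "xs k = 0\<^sub>v N"
      then show False using xsp[of k] A by simp
    qed
    then have "xs k \<bullet> xs k \<noteq> 0" using self_scalar_zero[OF xs[of k]] by blast
    then show ?thesis using self_scalar_nonneg[of "xs k"] by linarith
  qed
  define v where "v k = (1 / sqrt (xs k \<bullet> xs k)) \<cdot>\<^sub>v xs k" for k
  have v: "v k \<in> carrier_vec N" for k using xs by (simp add: v_def)
  have vdim: "dim_vec (v k) = N" for k using v[of k] by (simp add: carrier_vecD)
  have aa: "(1 / sqrt (xs k \<bullet> xs k)) * (1 / sqrt (xs k \<bullet> xs k)) = 1 / (xs k \<bullet> xs k)" for k
    using nz[of k] by (simp add: divide_simps)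
  have vv: "v k \<bullet> v k = 1" for k
  proof -
    have "v k \<bullet> v k = (1 / sqrt (xs k \<bullet> xs k)) * ((1 / sqrt (xs k \<bullet> xs k)) * (xs k \<bullet> xs k))"
      using xs[of k] unfolding v_def by simp
    also have "\<dots> = 1" using aa[of k] nz[of k] by (simp add: mult.assoc[symmetric])
    finally show ?thesis .
  qed
  have vA: "v k \<bullet> (A *\<^sub>v v k) > - (1 / (real k + 1))" for k
  proof -
    have "v k \<bullet> (A *\<^sub>v v k) = (1 / sqrt (xs k \<bullet> xs k)) * ((1 / sqrt (xs k \<bullet> xs k)) * (xs k \<bullet> (A *\<^sub>v xs k)))"
      using xs[of k] A unfolding v_def by (simp add: mult_mat_vec[OF A xs[of k]])
    also have "\<dots> = (xs k \<bullet> (A *\<^sub>v xs k)) / (xs k \<bullet> xs k)"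
      using aa[of k] by (simp add: mult.assoc[symmetric])
    finally have eq: "v k \<bullet> (A *\<^sub>v v k) = (xs k \<bullet> (A *\<^sub>v xs k)) / (xs k \<bullet> xs k)" .
    have "- (1 / (real k + 1)) < (xs k \<bullet> (A *\<^sub>v xs k)) / (xs k \<bullet> xs k)"
      using xsp[of k] nz[of k] by (subst less_divide_eq) simp
    then show ?thesis using eq by simp
  qed
  have bnd: "\<bar>v k $ i\<bar> \<le> 1" if "i < N" for k i
  proof -
    have "(v k $ i)^2 \<le> (\<Sum>j<N. (v k $ j)^2)"
      using that by (intro member_le_sum) auto
    also have "\<dots> = 1" using vv[of k] v[of k] by (simp add: scalar_prod_def lessThan_atLeast0 power2_eq_square)
    finally show ?thesis using abs_le_square_iff[of "v k $ i" 1] by simp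
  qed
  define f where "f k i = (if i < N then v k $ i else 0)" for k i
  have "\<And>k i. \<bar>f k i\<bar> \<le> 1" using bnd by (simp add: f_def)
  then obtain s L where s: "strict_mono s" and L: "\<forall>i<N. (\<lambda>k. f (s k) i) \<longlonglongrightarrow> L i"
    using multi_subseq by blast
  then have L': "(\<lambda>k. v (s k) $ i) \<longlonglongrightarrow> L i" if "i < N" for i using that by (simp add: f_def)
  define Lv where "Lv = vec N L"
  have Lv: "Lv \<in> carrier_vec N" by (simp add: Lv_def)
  have "(\<lambda>k. v (s k) \<bullet> v (s k)) \<longlonglongrightarrow> Lv \<bullet> Lv"
  proof -
    have "(\<lambda>k. \<Sum>i<N. v (s k) $ i * v (s k) $ i) \<longlonglongrightarrow> (\<Sum>i<N. L i * L i)"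
      by (intro tendsto_intros L') auto
    then show ?thesis by (simp add: scalar_prod_def Lv_def lessThan_atLeast0 vdim)
  qed
  then have "Lv \<bullet> Lv = 1" using vv by (simp add: LIMSEQ_const_iff)
  then have Lnz: "Lv \<noteq> 0\<^sub>v N" by auto
  have lim2: "(\<lambda>k. v (s k) \<bullet> (A *\<^sub>v v (s k))) \<longlonglongrightarrow> Lv \<bullet> (A *\<^sub>v Lv)"
  proof -
    have "(\<lambda>k. \<Sum>i<N. \<Sum>j<N. v (s k) $ i * A $$ (i,j) * v (s k) $ j) \<longlonglongrightarrow> (\<Sum>i<N. \<Sum>j<N. L i * A $$ (i,j) * L j)"
      by (intro tendsto_intros L') auto
    then show ?thesis using v Lv A by (simp add: quad_form_sum Lv_def)
  qed
  have lim3: "(\<lambda>k. - (1 / (real (s k) + 1))) \<longlonglongrightarrow> 0"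
  proof -
    have "(\<lambda>k. 1 / (real k + 1)) \<longlonglongrightarrow> 0"
      using LIMSEQ_inverse_real_of_nat by (simp add: inverse_eq_divide add.commute)
    then have "((\<lambda>k. 1 / (real k + 1)) \<circ> s) \<longlonglongrightarrow> 0" using s LIMSEQ_subseq_LIMSEQ by blast
    then show ?thesis using tendsto_minus by (force simp: o_def)
  qed
  have "Lv \<bullet> (A *\<^sub>v Lv) \<ge> 0"
    using lim3 lim2 by (rule LIMSEQ_le) (use vA less_imp_le in blast)
  then show False using neg Lv Lnz by force
qed



lemma QTQ_entries:
  assumes n0: "n > 0" and Q: "Q \<in> carrier_mat (n-1) n"
    and QQ: "Q * transpose_mat Q = 1\<^sub>m (n-1)"
    and Q1: "Q *\<^sub>v ones_vec n = 0\<^sub>v (n-1)"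
    and i: "i < n" and j: "j < n"
  shows "(\<Sum>k=0..<n-1. Q$$(k,i) * Q$$(k,j)) = (if i = j then 1 else 0) - 1 / real n"
proof -
  have QQe: "(\<Sum>k=0..<n. Q$$(a,k) * Q$$(b,k)) = (if a = b then 1 else 0)" if "a < n-1" "b < n-1" for a b
  proof -
    have "(Q * transpose_mat Q) $$ (a,b) = (\<Sum>k=0..<n. Q$$(a,k) * Q$$(b,k))"
      using Q that by (simp add: scalar_prod_def)
    then show ?thesis using QQ that by simp
  qed
  have Q1e: "(\<Sum>k=0..<n. Q$$(a,k)) = 0" if "a < n-1" for a
  proof -
    have "(Q *\<^sub>v ones_vec n) $ a = (\<Sum>k=0..<n. Q$$(a,k))"
      using Q that by (simp add: scalar_prod_def ones_vec_def)
    then show ?thesis using Q1 that by simp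
  qed
  define R where "R = mat n n (\<lambda>(a,b). if a < n-1 then Q $$ (a,b) else 1)"
  define S where "S = mat n n (\<lambda>(a,b). if b < n-1 then Q $$ (b,a) else 1 / real n)"
  have Rc: "R \<in> carrier_mat n n" and Sc: "S \<in> carrier_mat n n" by (simp_all add: R_def S_def)
  have RS: "R * S = 1\<^sub>m n"
  proof (rule eq_matI)
    fix a b assume a: "a < dim_row (1\<^sub>m n :: real mat)" and b: "b < dim_col (1\<^sub>m n :: real mat)"
    then have a': "a < n" and b': "b < n" by auto
    have e: "(R * S) $$ (a,b) = (\<Sum>k=0..<n. (if a < n-1 then Q $$ (a,k) else 1) * (if b < n-1 then Q $$ (b,k) else 1 / real n))"
      using a' b' by (simp add: R_def S_def scalar_prod_def)
    show "(R * S) $$ (a,b) = 1\<^sub>m n $$ (a,b)"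
    proof (cases "a < n-1")
      case True
      show ?thesis
      proof (cases "b < n-1")
        case True
        then show ?thesis using e \<open>a < n-1\<close> QQe[of a b] a' b' by simp
      next
        case False
        then have "b \<noteq> a" "(R * S) $$ (a,b) = (\<Sum>k=0..<n. Q $$ (a,k)) / real n"
          using e \<open>a < n-1\<close> by (auto simp: sum_divide_distrib)
        then show ?thesis using Q1e[OF \<open>a < n-1\<close>] a' b' by simp
      qed
    next
      case False
      show ?thesis
      proof (cases "b < n-1")
        case True
        then have "b \<noteq> a" "(R * S) $$ (a,b) = (\<Sum>k=0..<n. Q $$ (b,k))"
          using e False by auto
        then show ?thesis using Q1e[OF \<open>b < n-1\<close>] a' b' by simp
      next
        case False
        then have "a = b" using \<open>\<not> a < n-1\<close> a' b' by linarith
        have "(R * S) $$ (a,b) = (\<Sum>k=0..<n. 1 / real n)"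
          using e False \<open>\<not> a < n-1\<close> by simp
        also have "\<dots> = 1" using n0 by simp
        finally show ?thesis using \<open>a = b\<close> a' by simp
      qed
    qed
  qed (simp_all add: R_def S_def)
  have SR: "S * R = 1\<^sub>m n" by (rule mat_mult_left_right_inverse[OF Rc Sc RS])
  have "(S * R) $$ (i,j) = (\<Sum>k=0..<n. (if k < n-1 then Q $$ (k,i) else 1 / real n) * (if k < n-1 then Q $$ (k,j) else 1))"
    using i j by (simp add: R_def S_def scalar_prod_def)
  also have "\<dots> = (\<Sum>k=0..<n-1. Q$$(k,i) * Q$$(k,j)) + 1 / real n"
  proof -
    have nn: "n = Suc (n-1)" using n0 by simp
    have "(\<Sum>k=0..<n. (if k < n-1 then Q $$ (k,i) else 1 / real n) * (if k < n-1 then Q $$ (k,j) else 1))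
       = (\<Sum>k=0..<Suc (n-1). (if k < n-1 then Q $$ (k,i) else 1 / real n) * (if k < n-1 then Q $$ (k,j) else 1))"
      using nn by simp
    also have "\<dots> = (\<Sum>k=0..<n-1. (if k < n-1 then Q $$ (k,i) else 1 / real n) * (if k < n-1 then Q $$ (k,j) else 1)) + 1 / real n"
      by (simp only: sum.atLeast0_lessThan_Suc) simp
    also have "(\<Sum>k=0..<n-1. (if k < n-1 then Q $$ (k,i) else 1 / real n) * (if k < n-1 then Q $$ (k,j) else 1))
       = (\<Sum>k=0..<n-1. Q$$(k,i) * Q$$(k,j))"
      by (rule sum.cong) auto
    finally show ?thesis .
  qed
  finally show ?thesis using SR i j by simp
qed

lemma Q_proj:
  assumes n0: "n > 0" and Q: "Q \<in> carrier_mat (n-1) n"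
    and QQ: "Q * transpose_mat Q = 1\<^sub>m (n-1)"
    and Q1: "Q *\<^sub>v ones_vec n = 0\<^sub>v (n-1)"
    and e: "e \<in> carrier_vec n" and es: "ones_vec n \<bullet> e = 0"
  shows "transpose_mat Q *\<^sub>v (Q *\<^sub>v e) = e"
proof (rule eq_vecI)
  fix i assume "i < dim_vec e"
  then have i: "i < n" using e by simp
  have es': "(\<Sum>j=0..<n. e $ j) = 0" using es e by (simp add: scalar_prod_def ones_vec_def)
  have "(transpose_mat Q *\<^sub>v (Q *\<^sub>v e)) $ i = (\<Sum>k=0..<n-1. Q$$(k,i) * (\<Sum>j=0..<n. Q$$(k,j) * e $ j))"
    using Q e i by (simp add: scalar_prod_def)
  also have "\<dots> = (\<Sum>k=0..<n-1. \<Sum>j=0..<n. Q$$(k,i) * Q$$(k,j) * e $ j)"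
    by (simp add: sum_distrib_left mult.assoc)
  also have "\<dots> = (\<Sum>j=0..<n. \<Sum>k=0..<n-1. Q$$(k,i) * Q$$(k,j) * e $ j)"
    by (rule sum.swap)
  also have "\<dots> = (\<Sum>j=0..<n. (\<Sum>k=0..<n-1. Q$$(k,i) * Q$$(k,j)) * e $ j)"
    by (simp add: sum_distrib_right)
  also have "\<dots> = (\<Sum>j=0..<n. (if j = i then e $ j else 0) - e $ j / real n)"
  proof (rule sum.cong[OF refl])
    fix j assume "j \<in> {0..<n}"
    then have eqj: "(\<Sum>k=0..<n-1. Q$$(k,i) * Q$$(k,j)) = (if i = j then 1 else 0) - 1 / real n"
      by (intro QTQ_entries[OF n0 Q QQ Q1 i]) auto
    show "(\<Sum>k=0..<n-1. Q$$(k,i) * Q$$(k,j)) * e $ j = (if j = i then e $ j else 0) - e $ j / real n"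
      unfolding eqj by (cases "j = i") (auto simp: left_diff_distrib)
  qed
  also have "\<dots> = e $ i - (\<Sum>j=0..<n. e $ j) / real n"
    using i by (simp add: sum_subtractf sum_divide_distrib)
  also have "\<dots> = e $ i" using es' by simp
  finally show "(transpose_mat Q *\<^sub>v (Q *\<^sub>v e)) $ i = e $ i" .
qed (use Q e in simp)

lemma psd_of_pos_def:
  assumes P: "pos_def N P" and u: "u \<in> carrier_vec N"
  shows "u \<bullet> (P *\<^sub>v u) \<ge> 0"
proof (cases "u = 0\<^sub>v N")
  case True
  have "P \<in> carrier_mat N N" using P by (simp add: pos_def_def)
  then show ?thesis using True by simp
next
  case False
  then show ?thesis using P u by (auto simp: pos_def_def intro: less_imp_le)
qed

lemma sq_le_self_scalar:
  assumes e: "e \<in> carrier_vec n" and i: "i < n"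
  shows "(e $ i)^2 \<le> e \<bullet> (e::real vec)"
proof -
  have "(e $ i)^2 \<le> (\<Sum>j\<in>{0..<n}. (e $ j)^2)"
    using i by (intro member_le_sum) auto
  then show ?thesis using e by (simp add: scalar_prod_def power2_eq_square)
qed

theorem corollary7:
  fixes n m r :: nat and W :: "nat \<Rightarrow> real mat" and Q P :: "real mat"
  assumes W: "\<forall>k\<in>{1..m}. eventually_doubly_stochastic n (W k)"
    and Q: "Q \<in> carrier_mat (n - 1) n"
    and QQ: "Q * transpose_mat Q = 1\<^sub>m (n - 1)"
    and Q1: "Q *\<^sub>v ones_vec n = 0\<^sub>v (n - 1)"
    and r: "r \<ge> 1"
    and P: "pos_def (n ^ r) P"
    and LMI: "\<forall>k\<in>{1..m}. neg_def ((n - 1) ^ r)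
       (kron_pow Q r * transpose_mat (kron_pow (W k) r) * P * kron_pow (W k) r * transpose_mat (kron_pow Q r)
        - kron_pow Q r * P * transpose_mat (kron_pow Q r))"
  shows "consensus_set n m W"
proof (cases "n = 0")
  case True then show ?thesis by (simp add: consensus_set_def)
next
  case False
  then have n0: "n > 0" by simp
  define K where "K k = kron_pow Q r * transpose_mat (kron_pow (W k) r) * P * kron_pow (W k) r * transpose_mat (kron_pow Q r)
        - kron_pow Q r * P * transpose_mat (kron_pow Q r)" for k
  have "\<forall>k\<in>{1..m}. \<exists>c>0. \<forall>z\<in>carrier_vec ((n-1)^r). z \<bullet> (K k *\<^sub>v z) \<le> - c * (z \<bullet> z)"
  proof
    fix k assume "k \<in> {1..m}"
    then have "neg_def ((n - 1) ^ r) (K k)" using LMI by (simp add: K_def)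
    then show "\<exists>c>0. \<forall>z\<in>carrier_vec ((n-1)^r). z \<bullet> (K k *\<^sub>v z) \<le> - c * (z \<bullet> z)"
      unfolding neg_def_def by (intro neg_def_uniform) auto
  qed
  from bchoice[OF this] obtain cf where cf0: "\<forall>k\<in>{1..m}. cf k > 0 \<and> (\<forall>z\<in>carrier_vec ((n-1)^r). z \<bullet> (K k *\<^sub>v z) \<le> - cf k * (z \<bullet> z))"
    by blast
  then have cf: "\<And>k. k \<in> {1..m} \<Longrightarrow> cf k > 0 \<and> (\<forall>z\<in>carrier_vec ((n-1)^r). z \<bullet> (K k *\<^sub>v z) \<le> - cf k * (z \<bullet> z))"
    by blast
  have Pc: "P \<in> carrier_mat (n^r) (n^r)" using P by (simp add: pos_def_def)
  have onesc: "ones_vec n \<in> carrier_vec n" by (simp add: ones_vec_def)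
  have Qrc: "kron_pow Q r \<in> carrier_mat ((n-1)^r) (n^r)" by (rule kron_pow_carrier[OF Q])
  have QrTc: "transpose_mat (kron_pow Q r) \<in> carrier_mat (n^r) ((n-1)^r)" using Qrc by simp
  have QTc: "transpose_mat Q \<in> carrier_mat n (n-1)" using Q by simp
  show ?thesis unfolding consensus_set_def
  proof (intro allI impI ballI)
    fix \<sigma> :: "nat \<Rightarrow> nat" and x0 :: "real vec" assume \<sigma>: "\<forall>t. \<sigma> t \<in> {1..m}" and x0: "x0 \<in> carrier_vec n"
    have m1: "m \<ge> 1" using \<sigma>[rule_format, of 0] by simp
    define c where "c = Min (cf ` {1..m})"
    have cpos: "c > 0" unfolding c_def using m1 cf by (subst Min_gr_iff) auto
    have cle: "c \<le> cf k" if "k \<in> {1..m}" for k unfolding c_def using that by (intro Min_le) auto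
    have Kb: "z \<bullet> (K (\<sigma> t) *\<^sub>v z) \<le> - c * (z \<bullet> z)" if z: "z \<in> carrier_vec ((n-1)^r)" for z t
    proof -
      have "z \<bullet> (K (\<sigma> t) *\<^sub>v z) \<le> - cf (\<sigma> t) * (z \<bullet> z)" using cf[of "\<sigma> t"] \<sigma> z by blast
      also have "\<dots> \<le> - c * (z \<bullet> z)"
        using cle[of "\<sigma> t"] \<sigma> self_scalar_nonneg[of z] by (simp add: mult_right_mono)
      finally show ?thesis .
    qed
    have Wds: "eventually_doubly_stochastic n (W (\<sigma> t))" for t using W \<sigma> by blast
    have Wc: "W (\<sigma> t) \<in> carrier_mat n n" for t
      using Wds[of t] by (simp add: eventually_doubly_stochastic_def eventually_positive_def)
    have W1: "W (\<sigma> t) *\<^sub>v ones_vec n = ones_vec n" for t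
      using Wds[of t] by (simp add: eventually_doubly_stochastic_def)
    have WT1: "transpose_mat (W (\<sigma> t)) *\<^sub>v ones_vec n = ones_vec n" for t
      using Wds[of t] by (simp add: eventually_doubly_stochastic_def)
    define x where "x t = traj W \<sigma> x0 t" for t
    have xS: "x (Suc t) = W (\<sigma> t) *\<^sub>v x t" for t by (simp add: x_def)
    have xc: "x t \<in> carrier_vec n" for t
    proof (induction t)
      case 0 then show ?case using x0 by (simp add: x_def)
    next
      case (Suc t) then show ?case using Wc[of t] by (simp add: xS)
    qed
    have sum_pres: "ones_vec n \<bullet> x t = ones_vec n \<bullet> x0" for t
    proof (induction t)
      case 0 then show ?case by (simp add: x_def)
    next
      case (Suc t)
      have "ones_vec n \<bullet> x (Suc t) = (transpose_mat (W (\<sigma> t)) *\<^sub>v ones_vec n) \<bullet> x t"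
        using transpose_vec_mult_scalar[OF Wc[of t] xc[of t] onesc] by (simp add: xS)
      then show ?case using Suc WT1[of t] by simp
    qed
    define \<alpha> where "\<alpha> = (ones_vec n \<bullet> x0) / real n"
    define e where "e t = x t - \<alpha> \<cdot>\<^sub>v ones_vec n" for t
    have ec: "e t \<in> carrier_vec n" for t using xc[of t] onesc by (simp add: e_def)
    have e_idx: "e t $ i = x t $ i - \<alpha>" if "i < n" for t i
      using that xc[of t] by (simp add: e_def ones_vec_def)
    have e_step: "e (Suc t) = W (\<sigma> t) *\<^sub>v e t" for t
    proof -
      have "W (\<sigma> t) *\<^sub>v e t = W (\<sigma> t) *\<^sub>v x t - W (\<sigma> t) *\<^sub>v (\<alpha> \<cdot>\<^sub>v ones_vec n)"
        unfolding e_def by (rule mult_minus_distrib_mat_vec[OF Wc xc]) (use onesc in simp)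
      also have "W (\<sigma> t) *\<^sub>v (\<alpha> \<cdot>\<^sub>v ones_vec n) = \<alpha> \<cdot>\<^sub>v ones_vec n"
        using mult_mat_vec[OF Wc[of t] onesc] W1[of t] by simp
      finally show ?thesis by (simp add: e_def xS)
    qed
    have oo: "ones_vec n \<bullet> ones_vec n = real n" by (simp add: ones_vec_def scalar_prod_def)
    have e_sum: "ones_vec n \<bullet> e t = 0" for t
    proof -
      have "ones_vec n \<bullet> e t = ones_vec n \<bullet> x t - ones_vec n \<bullet> (\<alpha> \<cdot>\<^sub>v ones_vec n)"
        unfolding e_def by (rule scalar_prod_minus_distrib[OF onesc xc]) (use onesc in simp)
      also have "\<dots> = 0" using sum_pres[of t] oo n0 onesc by (simp add: \<alpha>_def)
      finally show ?thesis .
    qed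
    define V where "V t = kvec (e t) r \<bullet> (P *\<^sub>v kvec (e t) r)" for t
    have V_nonneg: "V t \<ge> 0" for t unfolding V_def
      by (rule psd_of_pos_def[OF P kvec_carrier[OF ec]])
    have Vstep: "V (Suc t) \<le> V t - c * (e t \<bullet> e t)^r" for t
    proof -
      define Wk where "Wk = W (\<sigma> t)"
      define Wr where "Wr = kron_pow Wk r"
      define Qr where "Qr = kron_pow Q r"
      have Wkc: "Wk \<in> carrier_mat n n" using Wc by (simp add: Wk_def)
      have Wrc: "Wr \<in> carrier_mat (n^r) (n^r)" unfolding Wr_def by (rule kron_pow_carrier[OF Wkc])
      have WrTc: "transpose_mat Wr \<in> carrier_mat (n^r) (n^r)" using Wrc by simp
      have Qrc': "Qr \<in> carrier_mat ((n-1)^r) (n^r)" using Qrc by (simp add: Qr_def)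
      have QrTc': "transpose_mat Qr \<in> carrier_mat (n^r) ((n-1)^r)" using QrTc by (simp add: Qr_def)
      define y where "y = Q *\<^sub>v e t"
      have yc: "y \<in> carrier_vec (n-1)" using Q ec[of t] by (simp add: y_def)
      define z where "z = kvec y r"
      have zc: "z \<in> carrier_vec ((n-1)^r)" unfolding z_def by (rule kvec_carrier[OF yc])
      define u where "u = kvec (e t) r"
      have uc: "u \<in> carrier_vec (n^r)" unfolding u_def by (rule kvec_carrier[OF ec])
      define u' where "u' = kvec (e (Suc t)) r"
      have u'c: "u' \<in> carrier_vec (n^r)" unfolding u'_def by (rule kvec_carrier[OF ec])
      have proj: "transpose_mat Q *\<^sub>v y = e t"
        unfolding y_def by (rule Q_proj[OF n0 Q QQ Q1 ec e_sum])
      have a: "transpose_mat Qr *\<^sub>v z = u"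
      proof -
        have "transpose_mat Qr *\<^sub>v z = kron_pow (transpose_mat Q) r *\<^sub>v kvec y r"
          by (simp add: Qr_def z_def transpose_kron_pow[OF Q])
        also have "\<dots> = kvec (transpose_mat Q *\<^sub>v y) r" by (rule kron_pow_mult_kvec[OF QTc yc])
        finally show ?thesis using proj by (simp add: u_def)
      qed
      have b: "Wr *\<^sub>v u = u'"
        unfolding Wr_def u_def u'_def using kron_pow_mult_kvec[OF Wkc ec[of t], of r] e_step[of t]
        by (simp add: Wk_def)
      have Pu'c: "P *\<^sub>v u' \<in> carrier_vec (n^r)" using Pc u'c by simp
      have Puc: "P *\<^sub>v u \<in> carrier_vec (n^r)" using Pc uc by simp
      have M1c: "Qr * transpose_mat Wr * P * Wr * transpose_mat Qr \<in> carrier_mat ((n-1)^r) ((n-1)^r)"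
        by (intro mult_carrier_mat[OF mult_carrier_mat[OF mult_carrier_mat[OF mult_carrier_mat[OF Qrc' WrTc] Pc] Wrc] QrTc'])
      have M2c: "Qr * P * transpose_mat Qr \<in> carrier_mat ((n-1)^r) ((n-1)^r)"
        by (intro mult_carrier_mat[OF mult_carrier_mat[OF Qrc' Pc] QrTc'])
      have X1c: "Qr * transpose_mat Wr \<in> carrier_mat ((n-1)^r) (n^r)" by (rule mult_carrier_mat[OF Qrc' WrTc])
      have X2c: "Qr * transpose_mat Wr * P \<in> carrier_mat ((n-1)^r) (n^r)" by (rule mult_carrier_mat[OF X1c Pc])
      have X3c: "Qr * transpose_mat Wr * P * Wr \<in> carrier_mat ((n-1)^r) (n^r)" by (rule mult_carrier_mat[OF X2c Wrc])
      have X4c: "Qr * P \<in> carrier_mat ((n-1)^r) (n^r)" by (rule mult_carrier_mat[OF Qrc' Pc])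
      have m1v: "(Qr * transpose_mat Wr * P * Wr * transpose_mat Qr) *\<^sub>v z = Qr *\<^sub>v (transpose_mat Wr *\<^sub>v (P *\<^sub>v u'))"
      proof -
        have "(Qr * transpose_mat Wr * P * Wr * transpose_mat Qr) *\<^sub>v z = (Qr * transpose_mat Wr * P * Wr) *\<^sub>v u"
          using assoc_mult_mat_vec[OF X3c QrTc' zc] a by simp
        also have "\<dots> = (Qr * transpose_mat Wr * P) *\<^sub>v u'"
          using assoc_mult_mat_vec[OF X2c Wrc uc] b by simp
        also have "\<dots> = (Qr * transpose_mat Wr) *\<^sub>v (P *\<^sub>v u')"
          using assoc_mult_mat_vec[OF X1c Pc u'c] by simp
        also have "\<dots> = Qr *\<^sub>v (transpose_mat Wr *\<^sub>v (P *\<^sub>v u'))"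
          using assoc_mult_mat_vec[OF Qrc' WrTc Pu'c] by simp
        finally show ?thesis .
      qed
      have m2v: "(Qr * P * transpose_mat Qr) *\<^sub>v z = Qr *\<^sub>v (P *\<^sub>v u)"
      proof -
        have "(Qr * P * transpose_mat Qr) *\<^sub>v z = (Qr * P) *\<^sub>v u"
          using assoc_mult_mat_vec[OF X4c QrTc' zc] a by simp
        also have "\<dots> = Qr *\<^sub>v (P *\<^sub>v u)"
          using assoc_mult_mat_vec[OF Qrc' Pc uc] by simp
        finally show ?thesis .
      qed
      have WPc: "transpose_mat Wr *\<^sub>v (P *\<^sub>v u') \<in> carrier_vec (n^r)" using WrTc Pu'c by simp
      have s1: "z \<bullet> ((Qr * transpose_mat Wr * P * Wr * transpose_mat Qr) *\<^sub>v z) = u' \<bullet> (P *\<^sub>v u')"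
      proof -
        have "z \<bullet> ((Qr * transpose_mat Wr * P * Wr * transpose_mat Qr) *\<^sub>v z) = u \<bullet> (transpose_mat Wr *\<^sub>v (P *\<^sub>v u'))"
          using m1v transpose_vec_mult_scalar[OF Qrc' WPc zc] a by simp
        also have "\<dots> = (Wr *\<^sub>v u) \<bullet> (P *\<^sub>v u')"
          using transpose_vec_mult_scalar[OF WrTc Pu'c uc] by simp
        finally show ?thesis using b by simp
      qed
      have s2: "z \<bullet> ((Qr * P * transpose_mat Qr) *\<^sub>v z) = u \<bullet> (P *\<^sub>v u)"
        using m2v transpose_vec_mult_scalar[OF Qrc' Puc zc] a by simp
      have Kz: "z \<bullet> (K (\<sigma> t) *\<^sub>v z) = V (Suc t) - V t"
      proof -
        have "K (\<sigma> t) *\<^sub>v z = (Qr * transpose_mat Wr * P * Wr * transpose_mat Qr) *\<^sub>v z - (Qr * P * transpose_mat Qr) *\<^sub>v z"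
          unfolding K_def Qr_def[symmetric] Wr_def[symmetric] Wk_def[symmetric]
          by (rule minus_mult_distrib_mat_vec[OF M1c M2c zc])
        then have "z \<bullet> (K (\<sigma> t) *\<^sub>v z) = z \<bullet> ((Qr * transpose_mat Wr * P * Wr * transpose_mat Qr) *\<^sub>v z) - z \<bullet> ((Qr * P * transpose_mat Qr) *\<^sub>v z)"
          using scalar_prod_minus_distrib[OF zc mult_mat_vec_carrier[OF M1c zc] mult_mat_vec_carrier[OF M2c zc]] by simp
        then show ?thesis using s1 s2 by (simp add: V_def u_def u'_def)
      qed
      have yy: "y \<bullet> y = e t \<bullet> e t"
        using transpose_vec_mult_scalar[OF Q ec[of t] yc] proj by (simp add: y_def)
      have zz: "z \<bullet> z = (e t \<bullet> e t)^r"
        using scalar_kvec[OF yc, of r] yy by (simp add: z_def)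
      show ?thesis using Kb[OF zc, of t] Kz zz by simp
    qed
    have partial: "(\<Sum>t<T. c * (e t \<bullet> e t)^r) \<le> V 0 - V T" for T
    proof (induction T)
      case 0 then show ?case by simp
    next
      case (Suc T) then show ?case using Vstep[of T] by simp
    qed
    have nn: "c * (e t \<bullet> e t)^r \<ge> 0" for t using cpos self_scalar_nonneg[of "e t"] by simp
    have "summable (\<lambda>t. c * (e t \<bullet> e t)^r)"
    proof (rule summableI_nonneg_bounded[where x = "V 0"])
      fix T show "0 \<le> c * (e T \<bullet> e T)^r" by (rule nn)
      show "(\<Sum>t<T. c * (e t \<bullet> e t)^r) \<le> V 0" using partial[of T] V_nonneg[of T] by linarith
    qed
    then have l1: "(\<lambda>t. c * (e t \<bullet> e t)^r) \<longlonglongrightarrow> 0" by (rule summable_LIMSEQ_zero)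
    have l2: "(\<lambda>t. (e t \<bullet> e t)^r) \<longlonglongrightarrow> 0"
    proof -
      have "(\<lambda>t. (c * (e t \<bullet> e t)^r) / c) \<longlonglongrightarrow> 0 / c" by (rule tendsto_divide[OF l1 tendsto_const]) (use cpos in simp)
      then show ?thesis using cpos by simp
    qed
    have l3: "(\<lambda>t. e t \<bullet> e t) \<longlonglongrightarrow> 0"
    proof -
      have "(\<lambda>t. root r ((e t \<bullet> e t)^r)) \<longlonglongrightarrow> root r 0" by (rule tendsto_real_root[OF l2])
      moreover have "root r ((e t \<bullet> e t)^r) = e t \<bullet> e t" for t
        using r self_scalar_nonneg[of "e t"] by (simp add: real_root_power_cancel)
      ultimately show ?thesis by simp
    qed
    show "\<exists>\<alpha>. \<forall>i<n. (\<lambda>t. traj W \<sigma> x0 t $ i) \<longlonglongrightarrow> \<alpha>"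
    proof (intro exI[of _ \<alpha>] allI impI)
    fix i assume i: "i < n"
    have l4: "(\<lambda>t. (e t $ i)^2) \<longlonglongrightarrow> 0"
      by (rule tendsto_sandwich[OF _ _ tendsto_const l3]) (use sq_le_self_scalar[OF ec i] in auto)
    have "(\<lambda>t. sqrt ((e t $ i)^2)) \<longlonglongrightarrow> sqrt 0" by (rule tendsto_real_sqrt[OF l4])
    then have "(\<lambda>t. \<bar>e t $ i\<bar>) \<longlonglongrightarrow> 0" by simp
    then have "(\<lambda>t. e t $ i) \<longlonglongrightarrow> 0" by (simp add: tendsto_rabs_zero_iff)
    then have "(\<lambda>t. e t $ i + \<alpha>) \<longlonglongrightarrow> 0 + \<alpha>" by (intro tendsto_add tendsto_const)
    then show "(\<lambda>t. traj W \<sigma> x0 t $ i) \<longlonglongrightarrow> \<alpha>" using e_idx[OF i] by (simp add: x_def)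
    qed
  qed
qed


end
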